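(* Let $\mathscr C$ be a class of finite groups and $G$ a nontrivial finite group. Then $G\in\mathscr C^{**}$ if and only if $G/\mathrm{Rad}(G)$ is isomorphic to a nonempty direct product of finite simple groups belonging to $\mathscr C$.
   Context: A class of finite groups is a nonempty collection of finite groups closed under isomorphism. The dual class $\mathscr C^*$ is the class of finite groups $G$ such that every normal subgroup $H$ of $G$ with $G/H\in\mathscr C$ satisfies $H=G$; $\mathscr C^{**}=(\mathscr C^* )^*$. For a nontrivial finite group $G$, its Baer radical $\mathrm{Rad}(G)$ is the intersection of all maximal normal subgroups of $G$ (normal subgroups $H\ne G$ with $G/H$ simple). *)

theory Defs
  imports "HOL-Algebra.Algebra"
begin

text \<open>A class of finite groups is represented by a predicate C on groups whose carrier
lies in nat (every finite group is isomorphic to such a group).\<close>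

definition in_class :: "(nat monoid \<Rightarrow> bool) \<Rightarrow> ('a, 'b) monoid_scheme \<Rightarrow> bool" where
  "in_class C G \<longleftrightarrow> (\<exists>H. C H \<and> G \<cong> H)"

definition group_class :: "(nat monoid \<Rightarrow> bool) \<Rightarrow> bool" where
  "group_class C \<longleftrightarrow> (\<exists>H. C H) \<and> (\<forall>H. C H \<longrightarrow> group H \<and> finite (carrier H))"

definition dual_class :: "(nat monoid \<Rightarrow> bool) \<Rightarrow> nat monoid \<Rightarrow> bool" where
  "dual_class C G \<longleftrightarrow> group G \<and> finite (carrier G) \<and>
     (\<forall>H. H \<lhd> G \<and> in_class C (G Mod H) \<longrightarrow> H = carrier G)"

definition maximal_normal :: "('a, 'b) monoid_scheme \<Rightarrow> 'a set \<Rightarrow> bool" where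
  "maximal_normal G H \<longleftrightarrow> H \<lhd> G \<and> H \<noteq> carrier G \<and> simple_group (G Mod H)"

definition baer_rad :: "('a, 'b) monoid_scheme \<Rightarrow> 'a set" where
  "baer_rad G = \<Inter> {H. maximal_normal G H}"

end

theory Submission
  imports Defs
begin

lemma (in group) rcos_eq_self_iff:
  assumes "subgroup N G" "x \<in> carrier G"
  shows "N #> x = N \<longleftrightarrow> x \<in> N"
proof
  assume "N #> x = N" thus "x \<in> N" using rcos_self[OF assms(2,1)] by simp
next
  assume "x \<in> N" thus "N #> x = N" using subgroup.rcos_const[OF assms(1) is_group] by simp
qed

lemma (in group) mod_carrier_eq: "carrier (G Mod N) = (\<lambda>x. N #> x) ` carrier G"
  by (auto simp: FactGroup_def RCOSETS_def)

lemma (in normal) coset_group_hom: "group_hom G (G Mod H) (\<lambda>x. H #> x)"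
  by (simp add: group_hom_axioms_def group_hom_def factorgroup_is_group is_group r_coset_hom_Mod)

lemma (in normal) mod_nontriv:
  assumes "H \<noteq> carrier G"
  shows "carrier (G Mod H) \<noteq> {\<one>\<^bsub>G Mod H\<^esub>}"
proof
  assume a: "carrier (G Mod H) = {\<one>\<^bsub>G Mod H\<^esub>}"
  obtain x where x: "x \<in> carrier G" "x \<notin> H" using assms subset by blast
  have "H #> x \<in> carrier (G Mod H)" using x mod_carrier_eq by auto
  hence "H #> x = H" using a by (simp add: FactGroup_def)
  thus False using x rcos_eq_self_iff subgroup_axioms by blast
qed

lemma (in group) maximal_absorb:
  assumes N: "N \<lhd> G" "simple_group (G Mod N)" and M: "M \<lhd> G" "\<not> M \<subseteq> N"
  shows "\<forall>x\<in>carrier G. \<exists>n\<in>N. \<exists>m\<in>M. x = n \<otimes> m"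
proof
  fix x assume x: "x \<in> carrier G"
  interpret N: normal N G by (rule N(1))
  interpret M: normal M G by (rule M(1))
  interpret h: group_hom G "G Mod N" "\<lambda>x. N #> x" by (rule N.coset_group_hom)
  have surj: "(\<lambda>x. N #> x) ` carrier G = carrier (G Mod N)" by (simp add: mod_carrier_eq)
  have nm: "(\<lambda>x. N #> x) ` M \<lhd> G Mod N"
    using M.surj_hom_normal_subgroup[OF h.group_hom_axioms surj] .
  from simple_group.no_real_normal_subgroup[OF N(2) nm]
  have "(\<lambda>x. N #> x) ` M = carrier (G Mod N) \<or> (\<lambda>x. N #> x) ` M = {\<one>\<^bsub>G Mod N\<^esub>}" .
  moreover have "(\<lambda>x. N #> x) ` M \<noteq> {\<one>\<^bsub>G Mod N\<^esub>}"
  proof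
    assume a: "(\<lambda>x. N #> x) ` M = {\<one>\<^bsub>G Mod N\<^esub>}"
    have "M \<subseteq> N"
    proof
      fix m assume m: "m \<in> M"
      hence "N #> m = N" using a by (auto simp: FactGroup_def)
      thus "m \<in> N" using m M.subset rcos_eq_self_iff N.subgroup_axioms by blast
    qed
    thus False using M(2) by simp
  qed
  ultimately have eq: "(\<lambda>x. N #> x) ` M = carrier (G Mod N)" by blast
  have "N #> x \<in> carrier (G Mod N)" using x surj by blast
  then obtain m where m: "m \<in> M" "N #> x = N #> m" using eq by (metis imageE)
  hence "x \<in> N #> m" using x rcos_self N.subgroup_axioms by metis
  then obtain n where "n \<in> N" "x = n \<otimes> m" unfolding r_coset_def by blast
  thus "\<exists>n\<in>N. \<exists>m\<in>M. x = n \<otimes> m" using m by blast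
qed

lemma (in group) maximal_contained_eq:
  assumes K: "K \<lhd> G" "simple_group (G Mod K)" and N: "N \<lhd> G" "N \<noteq> carrier G" "K \<subseteq> N"
  shows "N = K"
proof (rule ccontr)
  assume ne: "N \<noteq> K"
  hence "\<not> N \<subseteq> K" using N(3) by blast
  from maximal_absorb[OF K N(1) this] have "carrier G \<subseteq> N"
  proof (intro subsetI)
    fix x assume all: "\<forall>x\<in>carrier G. \<exists>n\<in>K. \<exists>m\<in>N. x = n \<otimes> m" and x: "x \<in> carrier G"
    then obtain k n where "k \<in> K" "n \<in> N" "x = k \<otimes> n" by blast
    thus "x \<in> N" using N(3) subgroup.m_closed[OF normal_imp_subgroup[OF N(1)]] by blast
  qed
  thus False using N(2) normal_imp_subgroup[OF N(1)] subgroup.subset by blast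
qed

lemma (in group) finite_group_iso_nat:
  assumes fin: "finite (carrier G)"
  shows "\<exists>H::nat monoid. group H \<and> finite (carrier H) \<and> G \<cong> H"
proof -
  obtain f where f: "bij_betw f (carrier G) {0..<card (carrier G)}"
    using ex_bij_betw_finite_nat[OF fin] by blast
  hence inj: "inj_on f (carrier G)" by (simp add: bij_betw_def)
  have w: "weak_group_morphism f {\<one>} G"
  proof (rule weak_group_morphismsI[OF one_is_normal])
    fix a b assume ab: "a \<in> carrier G" "b \<in> carrier G"
    show "f a = f b \<longleftrightarrow> a \<otimes> inv b \<in> {\<one>}"
    proof -
      have "a \<otimes> inv b = \<one> \<longleftrightarrow> a = b"
        using ab by (metis r_inv inv_equality inv_inv inv_closed)
      thus ?thesis using inj_on_eq_iff[OF inj ab] by simp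
    qed
  qed
  have "group (image_group f G)" by (rule image_group_is_group[OF w])
  moreover have "finite (carrier (image_group f G))" using fin by (simp add: image_group_carrier)
  moreover have "G \<cong> image_group f G" using inj_imp_image_group_iso[OF inj] by (auto simp: is_iso_def)
  ultimately show ?thesis by blast
qed

lemma card_gt1_aux: "finite A \<Longrightarrow> a \<in> A \<Longrightarrow> A \<noteq> {a} \<Longrightarrow> card A > 1"
proof -
  assume "finite A" "a \<in> A" "A \<noteq> {a}"
  then obtain b where "b \<in> A" "b \<noteq> a" by blast
  hence "card {a,b} \<le> card A" using \<open>finite A\<close> \<open>a \<in> A\<close> by (intro card_mono) auto
  thus ?thesis using \<open>b \<noteq> a\<close> by simp
qed

lemma (in group) exists_maximal_normal:
  assumes fin: "finite (carrier G)" and nt: "carrier G \<noteq> {\<one>}"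
  shows "\<exists>M. M \<lhd> G \<and> M \<noteq> carrier G \<and> simple_group (G Mod M)"
proof -
  define S where "S = {M. M \<lhd> G \<and> M \<noteq> carrier G}"
  have finS: "finite S"
    by (rule finite_subset[of _ "Pow (carrier G)"]) (auto simp: S_def fin dest: normal_imp_subgroup subgroup.subset)
  have "{\<one>} \<in> S" using one_is_normal nt by (auto simp: S_def)
  hence neS: "S \<noteq> {}" by blast
  obtain M where M: "M \<in> S" "card M = Max (card ` S)"
    using Max_in[of "card ` S"] finS neS by (metis (no_types, lifting) empty_is_image finite_imageI imageE)
  have Mmax: "\<And>M'. M' \<in> S \<Longrightarrow> card M' \<le> card M" using M(2) finS by simp
  have Mn: "M \<lhd> G" and Mne: "M \<noteq> carrier G" using M(1) by (auto simp: S_def)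
  interpret M: normal M G by (rule Mn)
  interpret Q: group "G Mod M" by (rule M.factorgroup_is_group)
  have finQ: "finite (carrier (G Mod M))" using fin by (simp add: mod_carrier_eq)
  have "simple_group (G Mod M)"
  proof (rule simple_group.intro[OF Q.is_group], unfold_locales)
    show "1 < order (G Mod M)"
      unfolding order_def using card_gt1_aux[OF finQ Q.one_closed M.mod_nontriv[OF Mne]] .
  next
    fix K assume K: "K \<lhd> G Mod M"
    interpret K: normal K "G Mod M" by (rule K)
    define h where "h = (\<lambda>Z. r_coset (G Mod M) K Z) \<circ> (\<lambda>x. M #> x)"
    have hh: "h \<in> hom G ((G Mod M) Mod K)"
      unfolding h_def by (rule Group.hom_compose[OF M.r_coset_hom_Mod K.r_coset_hom_Mod])
    interpret h: group_hom G "(G Mod M) Mod K" h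
      by (simp add: group_hom_def group_hom_axioms_def hh is_group K.factorgroup_is_group)
    define K' where "K' = kernel G ((G Mod M) Mod K) h"
    have K'eq: "K' = {x \<in> carrier G. M #> x \<in> K}"
    proof -
      have "\<And>x. x \<in> carrier G \<Longrightarrow> (h x = \<one>\<^bsub>(G Mod M) Mod K\<^esub>) = (M #> x \<in> K)"
      proof -
        fix x assume x: "x \<in> carrier G"
        have "M #> x \<in> carrier (G Mod M)" using x by (auto simp: mod_carrier_eq)
        thus "(h x = \<one>\<^bsub>(G Mod M) Mod K\<^esub>) = (M #> x \<in> K)"
          using Q.rcos_eq_self_iff[OF K.subgroup_axioms] by (simp add: h_def FactGroup_def)
      qed
      thus ?thesis by (auto simp: K'_def kernel_def)
    qed
    have K'n: "K' \<lhd> G" unfolding K'_def by (rule h.normal_kernel)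
    have MK': "M \<subseteq> K'"
    proof
      fix m assume m: "m \<in> M"
      hence "M #> m = M" using rcos_eq_self_iff[OF M.subgroup_axioms] M.subset by auto
      moreover have "M \<in> K" using K.one_closed by (simp add: FactGroup_def)
      ultimately show "m \<in> K'" using m M.subset K'eq by auto
    qed
    show "K = carrier (G Mod M) \<or> K = {\<one>\<^bsub>G Mod M\<^esub>}"
    proof (cases "K' = carrier G")
      case True
      have "carrier (G Mod M) \<subseteq> K"
      proof
        fix Z assume "Z \<in> carrier (G Mod M)"
        then obtain x where "x \<in> carrier G" "Z = M #> x" by (auto simp: mod_carrier_eq)
        thus "Z \<in> K" using True K'eq by auto
      qed
      thus ?thesis using K.subset by blast
    next
      case False
      hence "K' \<in> S" using K'n by (simp add: S_def)
      hence "card K' \<le> card M" by (rule Mmax)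
      moreover have "finite K'" using K'eq fin by simp
      ultimately have "K' = M" using MK' card_seteq by (metis)
      have "K \<subseteq> {M}"
      proof
        fix Z assume Z: "Z \<in> K"
        then obtain x where x: "x \<in> carrier G" "Z = M #> x" using K.subset by (auto simp: mod_carrier_eq)
        hence "x \<in> M" using \<open>K' = M\<close> K'eq Z by auto
        thus "Z \<in> {M}" using x rcos_eq_self_iff[OF M.subgroup_axioms] by auto
      qed
      moreover have "M \<in> K" using K.one_closed by (simp add: FactGroup_def)
      ultimately show ?thesis by (auto simp: FactGroup_def)
    qed
  qed
  thus ?thesis using Mn Mne by blast
qed

lemma (in group) normal_Inter_carrier:
  assumes "\<And>i. i \<in> J \<Longrightarrow> K i \<lhd> G"
  shows "(\<Inter>i\<in>J. K i) \<inter> carrier G \<lhd> G"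
proof -
  have sg: "\<And>i. i \<in> J \<Longrightarrow> subgroup (K i) G" using assms normal_imp_subgroup by blast
  have "subgroup ((\<Inter>i\<in>J. K i) \<inter> carrier G) G"
  proof (rule subgroupI)
    show "(\<Inter>i\<in>J. K i) \<inter> carrier G \<noteq> {}" using sg subgroup.one_closed by blast
  qed (auto simp: sg subgroup.m_closed subgroup.m_inv_closed)
  moreover have "\<forall>x \<in> carrier G. \<forall>h \<in> (\<Inter>i\<in>J. K i) \<inter> carrier G. x \<otimes> h \<otimes> inv x \<in> (\<Inter>i\<in>J. K i) \<inter> carrier G"
    using assms normal_inv_iff by auto
  ultimately show ?thesis using normal_inv_iff by blast
qed

lemma (in group) crt_iso:
  assumes M: "M \<lhd> G" and N: "N \<lhd> G" and gen: "\<forall>x\<in>carrier G. \<exists>n\<in>N. \<exists>m\<in>M. x = n \<otimes> m"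
  shows "G Mod (M \<inter> N) \<cong> (G Mod M) \<times>\<times> (G Mod N)"
proof -
  interpret M: normal M G by (rule M)
  interpret N: normal N G by (rule N)
  define h where "h = (\<lambda>x. (M #> x, N #> x))"
  have hh: "h \<in> hom G ((G Mod M) \<times>\<times> (G Mod N))"
  proof (rule homI)
    fix x assume "x \<in> carrier G"
    thus "h x \<in> carrier ((G Mod M) \<times>\<times> (G Mod N))" by (auto simp: h_def mod_carrier_eq)
  next
    fix x y assume "x \<in> carrier G" "y \<in> carrier G"
    thus "h (x \<otimes> y) = h x \<otimes>\<^bsub>(G Mod M) \<times>\<times> (G Mod N)\<^esub> h y"
      by (simp add: h_def FactGroup_def M.rcos_sum N.rcos_sum)
  qed
  interpret h: group_hom G "(G Mod M) \<times>\<times> (G Mod N)" h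
    by (simp add: group_hom_def group_hom_axioms_def hh is_group DirProd_group
        M.factorgroup_is_group N.factorgroup_is_group)
  have ker: "kernel G ((G Mod M) \<times>\<times> (G Mod N)) h = M \<inter> N"
    using rcos_eq_self_iff[OF M.subgroup_axioms] rcos_eq_self_iff[OF N.subgroup_axioms] M.subset
    by (auto simp: kernel_def h_def FactGroup_def)
  have surj: "h ` carrier G = carrier ((G Mod M) \<times>\<times> (G Mod N))"
  proof
    show "h ` carrier G \<subseteq> carrier ((G Mod M) \<times>\<times> (G Mod N))" using hom_in_carrier[OF hh] by blast
  next
    show "carrier ((G Mod M) \<times>\<times> (G Mod N)) \<subseteq> h ` carrier G"
    proof
      fix p assume "p \<in> carrier ((G Mod M) \<times>\<times> (G Mod N))"
      then obtain a b where ab: "a \<in> carrier G" "b \<in> carrier G" "p = (M #> a, N #> b)"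
        by (auto simp: mod_carrier_eq)
      have "b \<otimes> inv a \<in> carrier G" using ab by simp
      then obtain n m where nm: "n \<in> N" "m \<in> M" "b \<otimes> inv a = n \<otimes> m" using gen by blast
      have n: "n \<in> carrier G" and m: "m \<in> carrier G" using nm M.subset N.subset by auto
      have e1: "n \<otimes> (m \<otimes> a) = b"
      proof -
        have "n \<otimes> (m \<otimes> a) = (n \<otimes> m) \<otimes> a" using n m ab by (simp add: m_assoc)
        also have "\<dots> = (b \<otimes> inv a) \<otimes> a" using nm by simp
        also have "\<dots> = b" using ab by (simp add: m_assoc)
        finally show ?thesis .
      qed
      have "M #> (m \<otimes> a) = M #> a"
        using coset_mult_assoc[OF M.subset m ab(1)] M.rcos_const[OF is_group nm(2)] by simp
      moreover have "N #> (m \<otimes> a) = N #> b"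
        using coset_mult_assoc[OF N.subset n, of "m \<otimes> a"] N.rcos_const[OF is_group nm(1)] e1 m ab
        by simp
      ultimately have "h (m \<otimes> a) = p" using ab by (simp add: h_def)
      thus "p \<in> h ` carrier G" using m ab by blast
    qed
  qed
  show ?thesis using h.FactGroup_iso[OF surj] ker by simp
qed

lemma product_singleton_iso:
  assumes "group (F j)"
  shows "product_group {j} F \<cong> F j"
proof -
  have "(\<lambda>x. x j) \<in> iso (product_group {j} F) (F j)"
  proof (unfold iso_def, intro CollectI conjI)
    show "(\<lambda>x. x j) \<in> hom (product_group {j} F) (F j)"
      by (rule homI) auto
    show "bij_betw (\<lambda>x. x j) (carrier (product_group {j} F)) (carrier (F j))"
      unfolding bij_betw_def
    proof
      show "inj_on (\<lambda>x. x j) (carrier (product_group {j} F))"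
        by (rule inj_onI) (simp add: PiE_iff extensional_def fun_eq_iff, metis)
      show "(\<lambda>x. x j) ` carrier (product_group {j} F) = carrier (F j)"
      proof
        show "carrier (F j) \<subseteq> (\<lambda>x. x j) ` carrier (product_group {j} F)"
        proof
          fix y assume "y \<in> carrier (F j)"
          thus "y \<in> (\<lambda>x. x j) ` carrier (product_group {j} F)"
            by (intro image_eqI[of _ _ "\<lambda>i\<in>{j}. y"]) auto
        qed
      qed auto
    qed
  qed
  thus ?thesis by (auto simp: is_iso_def)
qed

lemma product_insert_iso:
  fixes F :: "'i \<Rightarrow> ('b,'c) monoid_scheme"
  assumes j: "j \<notin> I"
  shows "product_group (insert j I) F \<cong> product_group I F \<times>\<times> F j"
proof -
  define \<phi> :: "('i \<Rightarrow> 'b) \<Rightarrow> ('i \<Rightarrow> 'b) \<times> 'b" where "\<phi> = (\<lambda>x. (restrict x I, x j))"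
  have "\<phi> \<in> iso (product_group (insert j I) F) (product_group I F \<times>\<times> F j)"
  proof (unfold iso_def, intro CollectI conjI)
    show "\<phi> \<in> hom (product_group (insert j I) F) (product_group I F \<times>\<times> F j)"
    proof (rule homI)
      fix x assume "x \<in> carrier (product_group (insert j I) F)"
      thus "\<phi> x \<in> carrier (product_group I F \<times>\<times> F j)" by (auto simp: \<phi>_def)
    next
      fix x y assume "x \<in> carrier (product_group (insert j I) F)" "y \<in> carrier (product_group (insert j I) F)"
      show "\<phi> (x \<otimes>\<^bsub>product_group (insert j I) F\<^esub> y) = \<phi> x \<otimes>\<^bsub>product_group I F \<times>\<times> F j\<^esub> \<phi> y"
      proof -
        have "restrict (\<lambda>i\<in>insert j I. x i \<otimes>\<^bsub>F i\<^esub> y i) I = (\<lambda>i\<in>I. restrict x I i \<otimes>\<^bsub>F i\<^esub> restrict y I i)"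
          by (rule ext) simp
        thus ?thesis by (simp add: \<phi>_def)
      qed
    qed
    show "bij_betw \<phi> (carrier (product_group (insert j I) F)) (carrier (product_group I F \<times>\<times> F j))"
      unfolding bij_betw_def
    proof
      show "inj_on \<phi> (carrier (product_group (insert j I) F))"
      proof (rule inj_onI)
        fix x y assume xy: "x \<in> carrier (product_group (insert j I) F)" "y \<in> carrier (product_group (insert j I) F)"
          "\<phi> x = \<phi> y"
        show "x = y"
        proof
          fix i show "x i = y i"
          proof (cases "i \<in> insert j I")
            case True
            have r: "restrict x I = restrict y I" and jj: "x j = y j" using xy(3) by (auto simp: \<phi>_def)
            show ?thesis
            proof (cases "i = j")
              case True thus ?thesis using jj by simp
            next
              case False
              hence "i \<in> I" using \<open>i \<in> insert j I\<close> by simp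
              thus ?thesis using fun_cong[OF r, of i] by simp
            qed
          next
            case False
            have "x i = undefined" using PiE_arb[of x "insert j I" "\<lambda>i. carrier (F i)" i] xy(1) False by simp
            moreover have "y i = undefined" using PiE_arb[of y "insert j I" "\<lambda>i. carrier (F i)" i] xy(2) False by simp
            ultimately show ?thesis by simp
          qed
        qed
      qed
      show "\<phi> ` carrier (product_group (insert j I) F) = carrier (product_group I F \<times>\<times> F j)"
      proof
        show "\<phi> ` carrier (product_group (insert j I) F) \<subseteq> carrier (product_group I F \<times>\<times> F j)"
        proof (rule image_subsetI)
          fix x assume "x \<in> carrier (product_group (insert j I) F)"
          thus "\<phi> x \<in> carrier (product_group I F \<times>\<times> F j)" by (auto simp: \<phi>_def)
        qed
        show "carrier (product_group I F \<times>\<times> F j) \<subseteq> \<phi> ` carrier (product_group (insert j I) F)"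
        proof
          fix p assume "p \<in> carrier (product_group I F \<times>\<times> F j)"
          obtain u v where p: "p = (u, v)" by (cases p)
          have uv: "u \<in> (\<Pi>\<^sub>E i\<in>I. carrier (F i))" "v \<in> carrier (F j)"
            using \<open>p \<in> carrier (product_group I F \<times>\<times> F j)\<close> p by simp_all
          define w where "w = (\<lambda>i\<in>insert j I. if i = j then v else u i)"
          have "w \<in> carrier (product_group (insert j I) F)" using uv by (auto simp: w_def)
          moreover have "restrict w I = u"
          proof
            fix i show "restrict w I i = u i"
            proof (cases "i \<in> I")
              case True
              hence "i \<noteq> j" using j by blast
              thus ?thesis using True by (simp add: w_def)
            next
              case False
              thus ?thesis using PiE_arb[OF uv(1) False] by simp
            qed
          qed
          moreover have "w j = v" by (simp add: w_def)
          ultimately have "\<phi> w = p" using p by (simp add: \<phi>_def)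
          moreover note \<open>w \<in> carrier (product_group (insert j I) F)\<close>
          ultimately show "p \<in> \<phi> ` carrier (product_group (insert j I) F)" by (metis image_eqI)
        qed
      qed
    qed
  qed
  thus ?thesis by (auto simp: is_iso_def)
qed

lemma (in group) rad_product_aux:
  assumes fin: "finite J" "J \<noteq> {}" and max: "\<And>j. j \<in> J \<Longrightarrow> N j \<lhd> G \<and> simple_group (G Mod N j)"
  shows "\<exists>I \<subseteq> J. I \<noteq> {} \<and> G Mod (\<Inter>j\<in>J. N j) \<cong> product_group I (\<lambda>i. G Mod N i)"
  using fin max
proof (induction J rule: finite_ne_induct)
  case (singleton j)
  hence Nj: "N j \<lhd> G" by simp
  have gr: "group (product_group {j} (\<lambda>i. G Mod N i))"
    using normal.factorgroup_is_group[OF Nj] by (intro product_group) simp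
  have "product_group {j} (\<lambda>i. G Mod N i) \<cong> G Mod N j"
    using product_singleton_iso[of "\<lambda>i. G Mod N i" j] normal.factorgroup_is_group[OF Nj] by simp
  hence "G Mod N j \<cong> product_group {j} (\<lambda>i. G Mod N i)" by (rule group.iso_sym[OF gr])
  thus ?case by auto
next
  case (insert j J')
  have maxJ': "\<And>i. i \<in> J' \<Longrightarrow> N i \<lhd> G \<and> simple_group (G Mod N i)" using insert.prems by simp
  from insert.IH[OF maxJ'] obtain I where I: "I \<subseteq> J'" "I \<noteq> {}"
    "G Mod (\<Inter>j\<in>J'. N j) \<cong> product_group I (\<lambda>i. G Mod N i)" by blast
  define M where "M = (\<Inter>j\<in>J'. N j)"
  obtain i0 where i0: "i0 \<in> J'" using insert.hyps(2) by blast
  have "N i0 \<subseteq> carrier G" using maxJ'[OF i0] normal_imp_subgroup subgroup.subset by blast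
  hence "M \<subseteq> carrier G" using i0 unfolding M_def by blast
  hence Meq: "M = (\<Inter>j\<in>J'. N j) \<inter> carrier G" unfolding M_def by blast
  have Mn: "M \<lhd> G" unfolding Meq by (rule normal_Inter_carrier) (use maxJ' in blast)
  have Nj: "N j \<lhd> G" "simple_group (G Mod N j)" using insert.prems by auto
  have inter: "(\<Inter>j\<in>insert j J'. N j) = M \<inter> N j" unfolding M_def by blast
  have I3: "G Mod M \<cong> product_group I (\<lambda>i. G Mod N i)" using I(3) unfolding M_def .
  show ?case
  proof (cases "M \<subseteq> N j")
    case True
    hence "(\<Inter>j\<in>insert j J'. N j) = M" using inter by blast
    hence "G Mod (\<Inter>j\<in>insert j J'. N j) \<cong> product_group I (\<lambda>i. G Mod N i)" using I3 by simp
    moreover have "I \<subseteq> insert j J'" using I(1) by blast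
    ultimately show ?thesis using I(2) by blast
  next
    case False
    have gen: "\<forall>x\<in>carrier G. \<exists>n\<in>N j. \<exists>m\<in>M. x = n \<otimes> m"
      by (rule maximal_absorb[OF Nj Mn False])
    have i1: "G Mod (M \<inter> N j) \<cong> (G Mod M) \<times>\<times> (G Mod N j)" by (rule crt_iso[OF Mn Nj(1) gen])
    have grM: "group (G Mod M)" by (rule normal.factorgroup_is_group[OF Mn])
    have i2: "(G Mod M) \<times>\<times> (G Mod N j) \<cong> product_group I (\<lambda>i. G Mod N i) \<times>\<times> (G Mod N j)"
      by (rule group.DirProd_iso_trans[OF grM I3 iso_refl])
    have jI: "j \<notin> I" using I(1) insert.hyps(3) by blast
    have grP: "group (product_group (insert j I) (\<lambda>i. G Mod N i))"
    proof (intro product_group)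
      fix i assume "i \<in> insert j I"
      hence "i \<in> insert j J'" using I(1) by blast
      thus "group (G Mod N i)" using insert.prems normal.factorgroup_is_group by blast
    qed
    have i3: "product_group I (\<lambda>i. G Mod N i) \<times>\<times> (G Mod N j) \<cong> product_group (insert j I) (\<lambda>i. G Mod N i)"
      using group.iso_sym[OF grP product_insert_iso[OF jI]] by simp
    have "G Mod (\<Inter>j\<in>insert j J'. N j) \<cong> product_group (insert j I) (\<lambda>i. G Mod N i)"
      unfolding inter using iso_trans[OF i1 iso_trans[OF i2 i3]] .
    moreover have "insert j I \<subseteq> insert j J'" using I(1) by blast
    ultimately show ?thesis by blast
  qed
qed

lemma (in group) subgroup_quot_iso:
  assumes Q: "Q \<lhd> G" and M: "subgroup M G" and gen: "\<forall>x\<in>carrier G. \<exists>n\<in>Q. \<exists>m\<in>M. x = n \<otimes> m"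
  shows "G\<lparr>carrier := M\<rparr> Mod (Q \<inter> M) \<cong> G Mod Q"
proof -
  interpret Q: normal Q G by (rule Q)
  define H where "H = G\<lparr>carrier := M\<rparr>"
  have grH: "group H" unfolding H_def by (rule subgroup.subgroup_is_group[OF M is_group])
  have Msub: "M \<subseteq> carrier G" using M subgroup.subset by blast
  have hh: "(\<lambda>m. Q #> m) \<in> hom H (G Mod Q)"
  proof (rule homI)
    fix x assume "x \<in> carrier H"
    thus "Q #> x \<in> carrier (G Mod Q)" using Msub by (auto simp: H_def mod_carrier_eq)
  next
    fix x y assume "x \<in> carrier H" "y \<in> carrier H"
    thus "Q #> (x \<otimes>\<^bsub>H\<^esub> y) = (Q #> x) \<otimes>\<^bsub>G Mod Q\<^esub> (Q #> y)"
    proof -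
      have xy: "x \<in> carrier G" "y \<in> carrier G" using \<open>x \<in> carrier H\<close> \<open>y \<in> carrier H\<close> Msub by (auto simp: H_def)
      have "x \<otimes>\<^bsub>H\<^esub> y = x \<otimes> y" by (simp add: H_def)
      thus ?thesis using Q.rcos_sum[OF xy] by (simp add: FactGroup_def)
    qed
  qed
  interpret h: group_hom H "G Mod Q" "\<lambda>m. Q #> m"
    by (simp add: group_hom_def group_hom_axioms_def hh grH Q.factorgroup_is_group)
  have ker: "kernel H (G Mod Q) (\<lambda>m. Q #> m) = Q \<inter> M"
    using rcos_eq_self_iff[OF Q.subgroup_axioms] Msub by (auto simp: kernel_def H_def FactGroup_def)
  have surj: "(\<lambda>m. Q #> m) ` carrier H = carrier (G Mod Q)"
  proof
    show "(\<lambda>m. Q #> m) ` carrier H \<subseteq> carrier (G Mod Q)" using hom_in_carrier[OF hh] by blast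
    show "carrier (G Mod Q) \<subseteq> (\<lambda>m. Q #> m) ` carrier H"
    proof
      fix Z assume "Z \<in> carrier (G Mod Q)"
      then obtain x where x: "x \<in> carrier G" "Z = Q #> x" by (auto simp: mod_carrier_eq)
      then obtain n m where nm: "n \<in> Q" "m \<in> M" "x = n \<otimes> m" using gen by blast
      have "Q #> x = (Q #> n) #> m" using coset_mult_assoc[OF Q.subset, of n m] nm Q.subset Msub by auto
      also have "\<dots> = Q #> m" using Q.rcos_const[OF is_group nm(1)] by simp
      finally have "Z = Q #> m" using x by simp
      thus "Z \<in> (\<lambda>m. Q #> m) ` carrier H" using nm(2) by (auto simp: H_def)
    qed
  qed
  show ?thesis using h.FactGroup_iso[OF surj] ker unfolding H_def by simp
qed

lemma (in group) quotient_iso_factor: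
  assumes fin: "finite J" and K: "\<And>i. i \<in> J \<Longrightarrow> K i \<lhd> G \<and> simple_group (G Mod K i)"
    and N: "N \<lhd> G" "simple_group (G Mod N)" "N \<noteq> carrier G"
    and sub: "(\<Inter>i\<in>J. K i) \<inter> carrier G \<subseteq> N"
  shows "\<exists>i\<in>J. G Mod N \<cong> G Mod K i"
  using fin K sub
proof (induction J rule: finite_induct)
  case empty
  hence "carrier G \<subseteq> N" by simp
  moreover have "N \<subseteq> carrier G" using N(1) normal_imp_subgroup subgroup.subset by blast
  ultimately show ?case using N(3) by blast
next
  case (insert j J')
  have KJ': "\<And>i. i \<in> J' \<Longrightarrow> K i \<lhd> G \<and> simple_group (G Mod K i)" using insert.prems(1) by simp
  define M where "M = (\<Inter>i\<in>J'. K i) \<inter> carrier G"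
  have Mn: "M \<lhd> G" unfolding M_def by (rule normal_Inter_carrier) (use KJ' in blast)
  have Kj: "K j \<lhd> G" "simple_group (G Mod K j)" using insert.prems(1) by auto
  have KM: "K j \<inter> M \<subseteq> N" using insert.prems(2) unfolding M_def by blast
  have Msub: "M \<subseteq> carrier G" unfolding M_def by blast
  have Msg: "subgroup M G" using Mn normal_imp_subgroup by blast
  show ?case
  proof (cases "M \<subseteq> N")
    case True
    from insert.IH[OF KJ' True[unfolded M_def]] show ?thesis by blast
  next
    case MN: False
    show ?thesis
    proof (cases "K j \<subseteq> N")
      case True
      have "N = K j" by (rule maximal_contained_eq[OF Kj N(1) N(3) True])
      thus ?thesis by auto
    next
      case KN: False
      have MK: "\<not> M \<subseteq> K j" using KM MN by blast
      have MNK: "M \<inter> N \<subseteq> K j"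
      proof (rule ccontr)
        assume a: "\<not> M \<inter> N \<subseteq> K j"
        have MNn: "M \<inter> N \<lhd> G" by (rule normal_subgroup_intersect[OF Mn N(1)])
        have gen: "\<forall>x\<in>carrier G. \<exists>k\<in>K j. \<exists>n\<in>M \<inter> N. x = k \<otimes> n"
          by (rule maximal_absorb[OF Kj MNn a])
        have "M \<subseteq> N"
        proof
          fix m assume m: "m \<in> M"
          hence mc: "m \<in> carrier G" using Msub by blast
          then obtain k n where kn: "k \<in> K j" "n \<in> M \<inter> N" "m = k \<otimes> n" using gen by blast
          have kc: "k \<in> carrier G" using kn(1) Kj(1) normal_imp_subgroup subgroup.subset by blast
          have nc: "n \<in> carrier G" using kn(2) Msub by blast
          have "k = m \<otimes> inv n" using kn(3) kc nc by (simp add: m_assoc)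
          hence "k \<in> M" using m kn(2) subgroup.m_closed[OF Msg] subgroup.m_inv_closed[OF Msg] by simp
          hence "k \<in> N" using kn(1) KM by blast
          thus "m \<in> N" using kn subgroup.m_closed[OF normal_imp_subgroup[OF N(1)]] by blast
        qed
        thus False using MN by simp
      qed
      have eq: "N \<inter> M = K j \<inter> M" using MNK KM by blast
      have genN: "\<forall>x\<in>carrier G. \<exists>n\<in>N. \<exists>m\<in>M. x = n \<otimes> m" by (rule maximal_absorb[OF N(1,2) Mn MN])
      have genK: "\<forall>x\<in>carrier G. \<exists>n\<in>K j. \<exists>m\<in>M. x = n \<otimes> m" by (rule maximal_absorb[OF Kj Mn MK])
      have i1: "G\<lparr>carrier := M\<rparr> Mod (N \<inter> M) \<cong> G Mod N" by (rule subgroup_quot_iso[OF N(1) Msg genN])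
      have i2: "G\<lparr>carrier := M\<rparr> Mod (K j \<inter> M) \<cong> G Mod K j" by (rule subgroup_quot_iso[OF Kj(1) Msg genK])
      have grQ: "group (G\<lparr>carrier := M\<rparr> Mod (N \<inter> M))"
        by (rule normal.factorgroup_is_group[OF normal_Int_subgroup[OF Msg N(1)]])
      have "G Mod N \<cong> G\<lparr>carrier := M\<rparr> Mod (N \<inter> M)" by (rule group.iso_sym[OF grQ i1])
      also have "\<dots> = G\<lparr>carrier := M\<rparr> Mod (K j \<inter> M)" using eq by simp
      finally have "G Mod N \<cong> G Mod K j" using i2 iso_trans by blast
      thus ?thesis by blast
    qed
  qed
qed

definition QH :: "(nat monoid \<Rightarrow> bool) \<Rightarrow> ('a, 'b) monoid_scheme \<Rightarrow> bool" where
  "QH D W \<longleftrightarrow> (\<exists>(Y::nat monoid) h. D Y \<and> h \<in> hom W Y \<and> h ` carrier W = carrier Y \<and> carrier Y \<noteq> {\<one>\<^bsub>Y\<^esub>})"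

lemma (in group) QH_iff:
  assumes DG: "\<And>Y. D Y \<Longrightarrow> group Y"
  shows "(\<exists>K. K \<lhd> G \<and> K \<noteq> carrier G \<and> in_class D (G Mod K)) \<longleftrightarrow> QH D G"
proof
  assume "\<exists>K. K \<lhd> G \<and> K \<noteq> carrier G \<and> in_class D (G Mod K)"
  then obtain K Y where K: "K \<lhd> G" "K \<noteq> carrier G" and Y: "D Y" "G Mod K \<cong> Y"
    by (auto simp: in_class_def)
  interpret K: normal K G by (rule K(1))
  obtain \<phi> where \<phi>: "\<phi> \<in> iso (G Mod K) Y" using Y(2) by (auto simp: is_iso_def)
  define h where "h = \<phi> \<circ> (\<lambda>x. K #> x)"
  have hh: "h \<in> hom G Y" unfolding h_def
    by (rule Group.hom_compose[OF K.r_coset_hom_Mod]) (use \<phi> in \<open>simp add: iso_def\<close>)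
  have bij: "bij_betw \<phi> (carrier (G Mod K)) (carrier Y)" using \<phi> by (simp add: iso_def)
  have surj: "h ` carrier G = carrier Y"
  proof -
    have "\<phi> ` ((\<lambda>x. K #> x) ` carrier G) = carrier Y" using bij unfolding bij_betw_def mod_carrier_eq by simp
    thus ?thesis unfolding h_def by (simp add: image_image)
  qed
  have "carrier Y \<noteq> {\<one>\<^bsub>Y\<^esub>}"
  proof
    assume a: "carrier Y = {\<one>\<^bsub>Y\<^esub>}"
    interpret Q: group "G Mod K" by (rule K.factorgroup_is_group)
    have o: "\<one>\<^bsub>G Mod K\<^esub> = K" by (simp add: FactGroup_def)
    have "K \<in> carrier (G Mod K)" using Q.one_closed o by simp
    then obtain b where b: "b \<in> carrier (G Mod K)" "b \<noteq> K"
      using K.mod_nontriv[OF K(2)] o by blast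
    have "\<phi> K \<in> carrier Y" "\<phi> b \<in> carrier Y" using b \<open>K \<in> carrier (G Mod K)\<close> bij_betwE[OF bij] by blast+
    hence "\<phi> K = \<phi> b" unfolding a by simp
    thus False using b \<open>K \<in> carrier (G Mod K)\<close> bij by (auto simp: bij_betw_def inj_on_def)
  qed
  thus "QH D G" using Y(1) hh surj unfolding QH_def by blast
next
  assume "QH D G"
  then obtain Y h where Y: "D Y" "h \<in> hom G Y" "h ` carrier G = carrier Y" "carrier Y \<noteq> {\<one>\<^bsub>Y\<^esub>}"
    unfolding QH_def by blast
  interpret h: group_hom G Y h
    by (simp add: group_hom_def group_hom_axioms_def Y(2) DG[OF Y(1)] is_group)
  have "G Mod kernel G Y h \<cong> Y" by (rule h.FactGroup_iso[OF Y(3)])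
  hence "in_class D (G Mod kernel G Y h)" using Y(1) by (auto simp: in_class_def)
  moreover have "kernel G Y h \<noteq> carrier G" using h.trivial_hom_iff Y(3,4) by auto
  ultimately show "\<exists>K. K \<lhd> G \<and> K \<noteq> carrier G \<and> in_class D (G Mod K)" using h.normal_kernel by blast
qed

lemma QH_iso:
  assumes "W \<cong> W'" "QH D W'"
  shows "QH D W"
proof -
  obtain \<phi> where \<phi>: "\<phi> \<in> iso W W'" using assms(1) by (auto simp: is_iso_def)
  obtain Y h where Y: "D Y" "h \<in> hom W' Y" "h ` carrier W' = carrier Y" "carrier Y \<noteq> {\<one>\<^bsub>Y\<^esub>}"
    using assms(2) unfolding QH_def by blast
  have "h \<circ> \<phi> \<in> hom W Y" by (rule Group.hom_compose) (use \<phi> Y(2) in \<open>auto simp: iso_def\<close>)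
  moreover have "(h \<circ> \<phi>) ` carrier W = carrier Y"
  proof -
    have "h ` (\<phi> ` carrier W) = carrier Y" using \<phi> Y(3) by (simp add: iso_def bij_betw_def)
    thus ?thesis by (simp add: image_image)
  qed
  ultimately show ?thesis using Y(1,4) unfolding QH_def by blast
qed

lemma dual_class_iff:
  assumes DG: "\<And>Y. D Y \<Longrightarrow> group Y"
  shows "dual_class D W \<longleftrightarrow> group W \<and> finite (carrier W) \<and> \<not> QH D W"
proof (cases "group W")
  case True
  show ?thesis using group.QH_iff[OF True DG] unfolding dual_class_def by blast
qed (simp add: dual_class_def)

lemma (in group) in_dual_iff:
  assumes DG: "\<And>Y. D Y \<Longrightarrow> group Y" and fin: "finite (carrier G)"
  shows "in_class (dual_class D) G \<longleftrightarrow> \<not> QH D G"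
proof
  assume "in_class (dual_class D) G"
  then obtain Y where Y: "dual_class D Y" "G \<cong> Y" by (auto simp: in_class_def)
  have "\<not> QH D Y" using Y(1) dual_class_iff[OF DG] by blast
  thus "\<not> QH D G" using QH_iso[OF iso_sym[OF Y(2)]] by blast
next
  assume nq: "\<not> QH D G"
  obtain Y :: "nat monoid" where Y: "group Y" "finite (carrier Y)" "G \<cong> Y"
    using finite_group_iso_nat[OF fin] by blast
  have "\<not> QH D Y" using nq QH_iso[OF Y(3)] by blast
  hence "dual_class D Y" using Y dual_class_iff[OF DG] by blast
  thus "in_class (dual_class D) G" using Y(3) by (auto simp: in_class_def)
qed

lemma (in group) main_quot_iff:
  assumes CG: "\<And>Z. C Z \<Longrightarrow> group Z" and fin: "finite (carrier G)"
  shows "(\<forall>(Y::nat monoid) h. group Y \<and> finite (carrier Y) \<and> h \<in> hom G Y \<and> h ` carrier G = carrier Y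
            \<and> carrier Y \<noteq> {\<one>\<^bsub>Y\<^esub>} \<longrightarrow> QH C Y)
         \<longleftrightarrow> (\<forall>N. maximal_normal G N \<longrightarrow> in_class C (G Mod N))"
proof
  assume H: "\<forall>(Y::nat monoid) h. group Y \<and> finite (carrier Y) \<and> h \<in> hom G Y \<and> h ` carrier G = carrier Y
            \<and> carrier Y \<noteq> {\<one>\<^bsub>Y\<^esub>} \<longrightarrow> QH C Y"
  show "\<forall>N. maximal_normal G N \<longrightarrow> in_class C (G Mod N)"
  proof (intro allI impI)
    fix N assume "maximal_normal G N"
    hence N: "N \<lhd> G" "N \<noteq> carrier G" "simple_group (G Mod N)" by (auto simp: maximal_normal_def)
    interpret N: normal N G by (rule N(1))
    interpret Q: group "G Mod N" by (rule N.factorgroup_is_group)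
    have finQ: "finite (carrier (G Mod N))" using fin by (simp add: mod_carrier_eq)
    obtain Y :: "nat monoid" where Y: "group Y" "finite (carrier Y)" "G Mod N \<cong> Y"
      using Q.finite_group_iso_nat[OF finQ] by blast
    obtain \<psi> where \<psi>: "\<psi> \<in> iso (G Mod N) Y" using Y(3) by (auto simp: is_iso_def)
    define h where "h = \<psi> \<circ> (\<lambda>x. N #> x)"
    have hh: "h \<in> hom G Y" unfolding h_def
      by (rule Group.hom_compose[OF N.r_coset_hom_Mod]) (use \<psi> in \<open>simp add: iso_def\<close>)
    have surj: "h ` carrier G = carrier Y"
    proof -
      have "\<psi> ` ((\<lambda>x. N #> x) ` carrier G) = carrier Y" using \<psi> unfolding iso_def bij_betw_def mod_carrier_eq by simp
      thus ?thesis unfolding h_def by (simp add: image_image)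
    qed
    have sY: "simple_group Y" by (rule simple_group.iso_simple[OF N(3) Y(1) \<psi>])
    have "carrier Y \<noteq> {\<one>\<^bsub>Y\<^esub>}" by (rule simple_group.simple_not_triv[OF sY])
    hence "QH C Y" using H Y hh surj by blast
    then obtain Z k where Z: "C Z" "k \<in> hom Y Z" "k ` carrier Y = carrier Z" "carrier Z \<noteq> {\<one>\<^bsub>Z\<^esub>}"
      unfolding QH_def by blast
    define g where "g = k \<circ> \<psi>"
    have gh: "g \<in> hom (G Mod N) Z" unfolding g_def
      by (rule Group.hom_compose[OF _ Z(2)]) (use \<psi> in \<open>simp add: iso_def\<close>)
    have gs: "g ` carrier (G Mod N) = carrier Z"
    proof -
      have "k ` (\<psi> ` carrier (G Mod N)) = carrier Z" using \<psi> Z(3) unfolding iso_def bij_betw_def by simp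
      thus ?thesis unfolding g_def by (simp add: image_image)
    qed
    interpret g: group_hom "G Mod N" Z g
      by (simp add: group_hom_def group_hom_axioms_def gh CG[OF Z(1)] Q.is_group)
    have "kernel (G Mod N) Z g = carrier (G Mod N) \<or> kernel (G Mod N) Z g = {\<one>\<^bsub>G Mod N\<^esub>}"
      by (rule simple_group.no_real_normal_subgroup[OF N(3) g.normal_kernel])
    moreover have "kernel (G Mod N) Z g \<noteq> carrier (G Mod N)" using g.trivial_hom_iff gs Z(4) by auto
    ultimately have "kernel (G Mod N) Z g = {\<one>\<^bsub>G Mod N\<^esub>}" by blast
    hence "g \<in> iso (G Mod N) Z" using iso_kernel_image[OF Q.is_group CG[OF Z(1)]] gh gs by blast
    hence "G Mod N \<cong> Z" by (auto simp: is_iso_def)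
    thus "in_class C (G Mod N)" using Z(1) by (auto simp: in_class_def)
  qed
next
  assume H: "\<forall>N. maximal_normal G N \<longrightarrow> in_class C (G Mod N)"
  show "\<forall>(Y::nat monoid) h. group Y \<and> finite (carrier Y) \<and> h \<in> hom G Y \<and> h ` carrier G = carrier Y
            \<and> carrier Y \<noteq> {\<one>\<^bsub>Y\<^esub>} \<longrightarrow> QH C Y"
  proof (intro allI impI)
    fix Y :: "nat monoid" and h
    assume "group Y \<and> finite (carrier Y) \<and> h \<in> hom G Y \<and> h ` carrier G = carrier Y \<and> carrier Y \<noteq> {\<one>\<^bsub>Y\<^esub>}"
    hence Y: "group Y" "finite (carrier Y)" "h \<in> hom G Y" "h ` carrier G = carrier Y" "carrier Y \<noteq> {\<one>\<^bsub>Y\<^esub>}"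
      by auto
    interpret Y: group Y by (rule Y(1))
    obtain M where M: "M \<lhd> Y" "M \<noteq> carrier Y" "simple_group (Y Mod M)"
      using Y.exists_maximal_normal[OF Y(2) Y(5)] by blast
    interpret M: normal M Y by (rule M(1))
    interpret YM: group "Y Mod M" by (rule M.factorgroup_is_group)
    define g where "g = (\<lambda>y. r_coset Y M y) \<circ> h"
    have gh: "g \<in> hom G (Y Mod M)" unfolding g_def by (rule Group.hom_compose[OF Y(3) M.r_coset_hom_Mod])
    have gs: "g ` carrier G = carrier (Y Mod M)"
    proof -
      have "(\<lambda>y. r_coset Y M y) ` (h ` carrier G) = carrier (Y Mod M)" using Y(4) Y.mod_carrier_eq by simp
      thus ?thesis unfolding g_def by (simp add: image_image)
    qed
    interpret g: group_hom G "Y Mod M" g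
      by (simp add: group_hom_def group_hom_axioms_def gh YM.is_group is_group)
    define N where "N = kernel G (Y Mod M) g"
    have Nn: "N \<lhd> G" unfolding N_def by (rule g.normal_kernel)
    have i1: "G Mod N \<cong> Y Mod M" unfolding N_def by (rule g.FactGroup_iso[OF gs])
    have grGN: "group (G Mod N)" by (rule normal.factorgroup_is_group[OF Nn])
    obtain \<chi> where \<chi>: "\<chi> \<in> iso (Y Mod M) (G Mod N)" using group.iso_sym[OF grGN i1] by (auto simp: is_iso_def)
    have sGN: "simple_group (G Mod N)" by (rule simple_group.iso_simple[OF M(3) grGN \<chi>])
    have "N \<noteq> carrier G"
    proof
      assume "N = carrier G"
      hence "g ` carrier G = {\<one>\<^bsub>Y Mod M\<^esub>}" using g.trivial_hom_iff N_def by simp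
      thus False using gs simple_group.simple_not_triv[OF M(3)] by simp
    qed
    hence "maximal_normal G N" using Nn sGN by (simp add: maximal_normal_def)
    hence "in_class C (G Mod N)" using H by blast
    then obtain Z where Z: "C Z" "G Mod N \<cong> Z" by (auto simp: in_class_def)
    have "Y Mod M \<cong> Z" using iso_trans[OF group.iso_sym[OF grGN i1] Z(2)] .
    then obtain \<chi>2 where \<chi>2: "\<chi>2 \<in> iso (Y Mod M) Z" by (auto simp: is_iso_def)
    define k where "k = \<chi>2 \<circ> (\<lambda>y. r_coset Y M y)"
    have kh: "k \<in> hom Y Z" unfolding k_def
      by (rule Group.hom_compose[OF M.r_coset_hom_Mod]) (use \<chi>2 in \<open>simp add: iso_def\<close>)
    have ks: "k ` carrier Y = carrier Z"
    proof -
      have "\<chi>2 ` ((\<lambda>y. r_coset Y M y) ` carrier Y) = carrier Z"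
        using \<chi>2 Y.mod_carrier_eq unfolding iso_def bij_betw_def by simp
      thus ?thesis unfolding k_def by (simp add: image_image)
    qed
    have sZ: "simple_group Z" by (rule simple_group.iso_simple[OF M(3) CG[OF Z(1)] \<chi>2])
    show "QH C Y" unfolding QH_def using Z(1) kh ks simple_group.simple_not_triv[OF sZ] by blast
  qed
qed

lemma (in group) rad_iff:
  assumes CG: "\<And>Z. C Z \<Longrightarrow> group Z \<and> finite (carrier Z)" and fin: "finite (carrier G)"
    and nt: "carrier G \<noteq> {\<one>}"
  shows "(\<forall>N. maximal_normal G N \<longrightarrow> in_class C (G Mod N)) \<longleftrightarrow>
    (\<exists>(I :: nat set) (F :: nat \<Rightarrow> nat monoid).
       finite I \<and> I \<noteq> {} \<and>
       (\<forall>i\<in>I. simple_group (F i) \<and> finite (carrier (F i)) \<and> in_class C (F i)) \<and>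
       G Mod (baer_rad G) \<cong> product_group I F)"
proof -
  define NN where "NN = {H. maximal_normal G H}"
  have finNN: "finite NN"
    by (rule finite_subset[of _ "Pow (carrier G)"]) (auto simp: NN_def maximal_normal_def fin dest: normal_imp_subgroup subgroup.subset)
  obtain M0 where "M0 \<lhd> G" "M0 \<noteq> carrier G" "simple_group (G Mod M0)"
    using exists_maximal_normal[OF fin nt] by blast
  hence "M0 \<in> NN" by (simp add: NN_def maximal_normal_def)
  hence neNN: "NN \<noteq> {}" by blast
  have NNsub: "\<And>H. H \<in> NN \<Longrightarrow> H \<subseteq> carrier G"
    by (auto simp: NN_def maximal_normal_def dest: normal_imp_subgroup subgroup.subset)
  have rad: "baer_rad G = \<Inter> NN" by (simp add: baer_rad_def NN_def)
  have "\<Inter> NN = (\<Inter>H\<in>NN. H) \<inter> carrier G" using neNN NNsub by auto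
  hence Rn: "baer_rad G \<lhd> G" unfolding rad
    by (simp only:) (rule normal_Inter_carrier, simp add: NN_def maximal_normal_def)
  show ?thesis
  proof
    assume H: "\<forall>N. maximal_normal G N \<longrightarrow> in_class C (G Mod N)"
    obtain e where e: "bij_betw e {0..<card NN} NN" using ex_bij_betw_nat_finite[OF finNN] by blast
    define J where "J = {0..<card NN}"
    have "card NN > 0" using finNN neNN card_gt_0_iff by blast
    hence finJ: "finite J" "J \<noteq> {}" by (simp_all add: J_def)
    have eJ: "e ` J = NN" using e by (simp add: J_def bij_betw_def)
    have emax: "\<And>j. j \<in> J \<Longrightarrow> e j \<lhd> G \<and> simple_group (G Mod e j)"
    proof -
      fix j assume "j \<in> J"
      hence "e j \<in> e ` J" by (rule imageI)
      hence "e j \<in> NN" unfolding eJ .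
      thus "e j \<lhd> G \<and> simple_group (G Mod e j)" by (simp add: NN_def maximal_normal_def)
    qed
    have ex: "\<exists>I \<subseteq> J. I \<noteq> {} \<and> G Mod (\<Inter>j\<in>J. e j) \<cong> product_group I (\<lambda>i. G Mod e i)"
      by (rule rad_product_aux[OF finJ emax])
    then obtain I where I0: "I \<subseteq> J \<and> I \<noteq> {} \<and> G Mod (\<Inter>j\<in>J. e j) \<cong> product_group I (\<lambda>i. G Mod e i)"
      by (erule exE)
    have I: "I \<subseteq> J" "I \<noteq> {}" "G Mod (\<Inter>j\<in>J. e j) \<cong> product_group I (\<lambda>i. G Mod e i)"
      using I0 by (rule conjunct1, rule conjunct1[OF conjunct2], rule conjunct2[OF conjunct2])
    have "(\<Inter>j\<in>J. e j) = baer_rad G" unfolding rad eJ ..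
    hence I3: "G Mod baer_rad G \<cong> product_group I (\<lambda>i. G Mod e i)" using I(3) by simp
    define F where "F = (\<lambda>i. SOME Z. C Z \<and> G Mod e i \<cong> Z)"
    have Fp: "\<And>i. i \<in> I \<Longrightarrow> C (F i) \<and> G Mod e i \<cong> F i"
    proof -
      fix i assume "i \<in> I"
      hence "i \<in> J" using I(1) by blast
      hence "e i \<in> e ` J" by (rule imageI)
      hence "e i \<in> NN" unfolding eJ .
      hence "in_class C (G Mod e i)" using H by (simp add: NN_def)
      hence "\<exists>Z. C Z \<and> G Mod e i \<cong> Z" by (simp add: in_class_def)
      thus "C (F i) \<and> G Mod e i \<cong> F i" unfolding F_def by (rule someI_ex)
    qed
    have Fprops: "\<forall>i\<in>I. simple_group (F i) \<and> finite (carrier (F i)) \<and> in_class C (F i)"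
    proof
      fix i assume i: "i \<in> I"
      have C: "C (F i)" and iso: "G Mod e i \<cong> F i" using Fp[OF i] by auto
      have s: "simple_group (G Mod e i)" using emax i I(1) by blast
      obtain \<phi> where ph: "\<phi> \<in> iso (G Mod e i) (F i)" using iso by (auto simp: is_iso_def)
      have "simple_group (F i)" by (rule simple_group.iso_simple[OF s conjunct1[OF CG[OF C]] ph])
      moreover have "in_class C (F i)" using C by (auto simp: in_class_def)
      ultimately show "simple_group (F i) \<and> finite (carrier (F i)) \<and> in_class C (F i)" using CG[OF C] by blast
    qed
    have "product_group I (\<lambda>i. G Mod e i) \<cong> product_group I F"
    proof (rule iso_product_groupI)
      fix i assume i: "i \<in> I"
      show "G Mod e i \<cong> F i" using Fp[OF i] by blast
      show "group (G Mod e i)" using emax i I(1) normal.factorgroup_is_group by blast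
      show "group (F i)" using Fp[OF i] CG by blast
    qed
    hence "G Mod baer_rad G \<cong> product_group I F" using iso_trans[OF I3] by blast
    moreover have "finite I" using I(1) finJ(1) finite_subset by blast
    ultimately show "\<exists>(I :: nat set) (F :: nat \<Rightarrow> nat monoid).
       finite I \<and> I \<noteq> {} \<and>
       (\<forall>i\<in>I. simple_group (F i) \<and> finite (carrier (F i)) \<and> in_class C (F i)) \<and>
       G Mod (baer_rad G) \<cong> product_group I F" using I(2) Fprops by blast
  next
    assume "\<exists>(I :: nat set) (F :: nat \<Rightarrow> nat monoid).
       finite I \<and> I \<noteq> {} \<and>
       (\<forall>i\<in>I. simple_group (F i) \<and> finite (carrier (F i)) \<and> in_class C (F i)) \<and>
       G Mod (baer_rad G) \<cong> product_group I F"
    then obtain I :: "nat set" and F :: "nat \<Rightarrow> nat monoid" where IF: "finite I"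
      "\<And>i. i \<in> I \<Longrightarrow> simple_group (F i)" "\<And>i. i \<in> I \<Longrightarrow> in_class C (F i)"
      "G Mod (baer_rad G) \<cong> product_group I F" by blast
    define R where "R = baer_rad G"
    interpret R: normal R G unfolding R_def by (rule Rn)
    have grF: "\<And>i. i \<in> I \<Longrightarrow> group (F i)" using IF(2) simple_group.axioms(1) by blast
    define P where "P = product_group I F"
    have grP: "group P" unfolding P_def using grF by (rule product_group)
    obtain \<phi> where \<phi>: "\<phi> \<in> iso (G Mod R) P" using IF(4) by (auto simp: is_iso_def R_def P_def)
    interpret \<phi>: group_hom "G Mod R" P \<phi>
      using \<phi> by (simp add: group_hom_def group_hom_axioms_def grP R.factorgroup_is_group iso_def)
    define \<psi> where "\<psi> = \<phi> \<circ> (\<lambda>x. R #> x)"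
    have \<psi>h: "\<psi> \<in> hom G P" unfolding \<psi>_def
      by (rule Group.hom_compose[OF R.r_coset_hom_Mod]) (use \<phi> in \<open>simp add: iso_def\<close>)
    have \<psi>s: "\<psi> ` carrier G = carrier P"
    proof -
      have "\<phi> ` ((\<lambda>x. R #> x) ` carrier G) = carrier P" using \<phi> unfolding iso_def bij_betw_def mod_carrier_eq by simp
      thus ?thesis unfolding \<psi>_def by (simp add: image_image)
    qed
    define g where "g = (\<lambda>i. (\<lambda>f. f i) \<circ> \<psi>)"
    define K where "K = (\<lambda>i. kernel G (F i) (g i))"
    have gh: "\<And>i. i \<in> I \<Longrightarrow> g i \<in> hom G (F i)"
    proof -
      fix i assume i: "i \<in> I"
      have "(\<lambda>f. f i) \<in> hom P (F i)"
        by (rule homI) (use i in \<open>auto simp: P_def\<close>)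
      thus "g i \<in> hom G (F i)" unfolding g_def by (rule Group.hom_compose[OF \<psi>h])
    qed
    have gs: "\<And>i. i \<in> I \<Longrightarrow> g i ` carrier G = carrier (F i)"
    proof -
      fix i assume i: "i \<in> I"
      have "(\<lambda>f. f i) ` carrier P = carrier (F i)"
      proof
        show "(\<lambda>f. f i) ` carrier P \<subseteq> carrier (F i)" using i by (auto simp: P_def)
        show "carrier (F i) \<subseteq> (\<lambda>f. f i) ` carrier P"
        proof
          fix y assume y: "y \<in> carrier (F i)"
          define w where "w = (\<lambda>k\<in>I. if k = i then y else \<one>\<^bsub>F k\<^esub>)"
          have "w \<in> carrier P" using y grF group.is_monoid monoid.one_closed by (fastforce simp: P_def w_def)
          moreover have "w i = y" using i by (simp add: w_def)
          ultimately show "y \<in> (\<lambda>f. f i) ` carrier P" by (metis image_eqI)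
        qed
      qed
      hence "(\<lambda>f. f i) ` (\<psi> ` carrier G) = carrier (F i)" unfolding \<psi>s .
      thus "g i ` carrier G = carrier (F i)" unfolding g_def by (simp add: image_image)
    qed
    have isoK: "\<And>i. i \<in> I \<Longrightarrow> G Mod K i \<cong> F i"
    proof -
      fix i assume i: "i \<in> I"
      interpret gi: group_hom G "F i" "g i"
        by (simp add: group_hom_def group_hom_axioms_def gh[OF i] grF[OF i] is_group)
      show "G Mod K i \<cong> F i" unfolding K_def by (rule gi.FactGroup_iso[OF gs[OF i]])
    qed
    have Kmax: "\<And>i. i \<in> I \<Longrightarrow> K i \<lhd> G \<and> simple_group (G Mod K i)"
    proof -
      fix i assume i: "i \<in> I"
      interpret gi: group_hom G "F i" "g i"
        by (simp add: group_hom_def group_hom_axioms_def gh[OF i] grF[OF i] is_group)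
      have Kn: "K i \<lhd> G" unfolding K_def by (rule gi.normal_kernel)
      have grQ: "group (G Mod K i)" by (rule normal.factorgroup_is_group[OF Kn])
      obtain \<chi> where "\<chi> \<in> iso (F i) (G Mod K i)" using group.iso_sym[OF grQ isoK[OF i]] by (auto simp: is_iso_def)
      hence "simple_group (G Mod K i)" by (rule simple_group.iso_simple[OF IF(2)[OF i] grQ])
      thus "K i \<lhd> G \<and> simple_group (G Mod K i)" using Kn by blast
    qed
    show "\<forall>N. maximal_normal G N \<longrightarrow> in_class C (G Mod N)"
    proof (intro allI impI)
      fix N assume mN: "maximal_normal G N"
      hence N: "N \<lhd> G" "simple_group (G Mod N)" "N \<noteq> carrier G" by (auto simp: maximal_normal_def)
      have "N \<in> NN" using mN by (simp add: NN_def)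
      hence RN: "R \<subseteq> N" unfolding R_def rad by (rule Inter_lower)
      have sub: "(\<Inter>i\<in>I. K i) \<inter> carrier G \<subseteq> N"
      proof
        fix x assume x: "x \<in> (\<Inter>i\<in>I. K i) \<inter> carrier G"
        hence xc: "x \<in> carrier G" by blast
        have comp: "\<psi> x i = \<one>\<^bsub>F i\<^esub>" if i: "i \<in> I" for i
        proof -
          have "x \<in> K i" using x i by blast
          thus ?thesis by (simp add: K_def kernel_def g_def)
        qed
        have "\<psi> x \<in> carrier P" by (rule hom_in_carrier[OF \<psi>h xc])
        hence ext: "\<psi> x \<in> (\<Pi>\<^sub>E i\<in>I. carrier (F i))" by (simp add: P_def)
        have "\<psi> x = \<one>\<^bsub>P\<^esub>"
        proof
          fix i show "\<psi> x i = \<one>\<^bsub>P\<^esub> i"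
          proof (cases "i \<in> I")
            case True thus ?thesis using comp by (simp add: P_def)
          next
            case False thus ?thesis using PiE_arb[OF ext False] by (simp add: P_def)
          qed
        qed
        moreover have "\<phi> R = \<one>\<^bsub>P\<^esub>" using \<phi>.hom_one by (simp add: FactGroup_def)
        ultimately have "\<phi> (R #> x) = \<phi> R" by (simp add: \<psi>_def)
        moreover have "R #> x \<in> carrier (G Mod R)" using xc by (auto simp: mod_carrier_eq)
        moreover have "R \<in> carrier (G Mod R)" using \<phi>.G.one_closed by (simp add: FactGroup_def)
        ultimately have "R #> x = R" using \<phi> by (auto simp: iso_def bij_betw_def inj_on_def)
        hence "x \<in> R" using rcos_eq_self_iff[OF R.subgroup_axioms xc] by simp
        thus "x \<in> N" using RN by blast
      qed
      obtain i where i: "i \<in> I" "G Mod N \<cong> G Mod K i"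
        using quotient_iso_factor[OF IF(1) Kmax N(1,2,3) sub] by blast
      obtain Z where Z: "C Z" "F i \<cong> Z" using IF(3)[OF i(1)] by (auto simp: in_class_def)
      have "G Mod N \<cong> Z" using iso_trans[OF i(2) iso_trans[OF isoK[OF i(1)] Z(2)]] .
      thus "in_class C (G Mod N)" using Z(1) by (auto simp: in_class_def)
    qed
  qed
qed

theorem proposition3p7:
  fixes C :: "nat monoid \<Rightarrow> bool" and G :: "('a, 'b) monoid_scheme"
  assumes "group_class C"
    and "group G" and "finite (carrier G)" and "carrier G \<noteq> {\<one>\<^bsub>G\<^esub>}"
  shows "in_class (dual_class (dual_class C)) G \<longleftrightarrow>
    (\<exists>(I :: nat set) (F :: nat \<Rightarrow> nat monoid).
       finite I \<and> I \<noteq> {} \<and>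
       (\<forall>i\<in>I. simple_group (F i) \<and> finite (carrier (F i)) \<and> in_class C (F i)) \<and>
       G Mod (baer_rad G) \<cong> product_group I F)"
proof -
  interpret group G by (rule assms(2))
  have CG: "\<And>Z. C Z \<Longrightarrow> group Z \<and> finite (carrier Z)" using assms(1) by (simp add: group_class_def)
  have CG1: "\<And>Z. C Z \<Longrightarrow> group Z" using CG by blast
  have DG: "\<And>Y. dual_class C Y \<Longrightarrow> group Y" by (simp add: dual_class_def)
  have s1: "in_class (dual_class (dual_class C)) G \<longleftrightarrow> \<not> QH (dual_class C) G"
    by (rule in_dual_iff[OF DG assms(3)])
  have s2: "\<not> QH (dual_class C) G \<longleftrightarrow> (\<forall>(Y::nat monoid) h. group Y \<and> finite (carrier Y) \<and> h \<in> hom G Y \<and> h ` carrier G = carrier Y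
            \<and> carrier Y \<noteq> {\<one>\<^bsub>Y\<^esub>} \<longrightarrow> QH C Y)"
  proof -
    have eq: "\<And>Y. dual_class C Y \<longleftrightarrow> group Y \<and> finite (carrier Y) \<and> \<not> QH C Y"
      by (rule dual_class_iff[OF CG1])
    show ?thesis unfolding QH_def[of "dual_class C" G] eq by blast
  qed
  have s3: "(\<forall>(Y::nat monoid) h. group Y \<and> finite (carrier Y) \<and> h \<in> hom G Y \<and> h ` carrier G = carrier Y
            \<and> carrier Y \<noteq> {\<one>\<^bsub>Y\<^esub>} \<longrightarrow> QH C Y)
         \<longleftrightarrow> (\<forall>N. maximal_normal G N \<longrightarrow> in_class C (G Mod N))"
    by (rule main_quot_iff[OF CG1 assms(3)])
  show ?thesis unfolding s1 s2 s3 by (rule rad_iff[OF CG assms(3) assms(4)])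
qed

end
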